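(* Fix $c_1\in(c_0,1)$, $c\in(c_0,c_1)$ and $R_0\in\mathcal{R}_c$, and for $0<\delta<\delta_0$ let $R_\delta=R_0-I_\delta+S_\delta$ be the travelling wave provided by the Main Theorem (so $S_\delta\in W^{2,\infty}(\mathbb{R})$, $S_\delta(0)=0$, $\|S_\delta\|_\infty\le C\delta^2$, $\|S_\delta'\|_\infty\le C\delta$, $\|S_\delta''\|_\infty\le C$, and $S_\delta$ has harmonic tails with wave number $k_c$ at $\pm\infty$, a limit at $+\infty$). Then the configurational forces satisfy $$\Upsilon_\delta=\Upsilon_0+O(\delta^2)\qquad(\delta\to0).$$
   Context: $\Delta_1F(x)=F(x+1)-2F(x)+F(x-1)$, $a(k)=\frac{\sin(k/2)}{k/2}$, $\Psi_0'(r)=\mathrm{sgn}(r)$, $\Phi_0(r)=\frac12r^2-|r|$. Potentials: $(\Psi_\delta)_{\delta>0}$ is a family of $C^2$ functions with $\Psi_\delta(0)=0$ such that $\Psi_\delta'(r)=\mathrm{sgn}(r)$ for $r\notin(-\delta,\delta)$, and $|\Psi_\delta'|\le C_\Psi$, $|\Psi_\delta''|\le C_\Psi/\delta$ on $\mathbb{R}$ with $C_\Psi$ independent of $\delta$; $\Phi_\delta(r)=\frac12r^2-\Psi_\delta(r)$; $I_\delta:=\frac12\int_{\mathbb{R}}(\Psi_\delta'-\Psi_0')\,dr$. Travelling waves solve $c^2R''=\Delta_1(R-\Psi_\delta'(R))$. Unperturbed waves (standing hypothesis, a known result): there are constants $0<c_0<1$ and $x_0,r_0,d_0,D_0>0$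 such that for every $c\in[c_0,1)$ the equation $a(k)=c$ has exactly one positive solution $k_c$, and there is a two-parameter family $\mathcal{R}_c$ of functions $R_0\in W^{2,\infty}(\mathbb{R})$ solving $c^2R_0''=\Delta_1(R_0-\mathrm{sgn}(R_0))$ with $R_0(0)=0$, given by $R_0=\bar R_0+\alpha(\cos(k_c\cdot)-1)+\beta\sin(k_c\cdot)$, $(\alpha,\beta)$ in an open neighbourhood $U_c$ of $0\in\mathbb{R}^2$, where $\bar R_0$ is a fixed member for which $\lim_{x\to+\infty}\bar R_0(x)$ exists and $\lim_{x\to-\infty}(\bar R_0(x)-\alpha_c^-(\cos(k_cx)-1)-\beta_c^-\sin(k_cx))$ exists for some constants $\alpha_c^-,\beta_c^-$. Every $R_0\in\mathcal{R}_c$ satisfies $\|R_0\|_\infty\le D_0(1-c^2)^{-1}$, $R_0(x)>r_0$ for $x>x_0$, $R_0(x)<-r_0$ for $x<-x_0$, $R_0'(x)>d_0$ for $|x|<x_0$. Configurational force of a wave $R_\delta$ (with $R_0$ corresponding to $\delta=0$): macroscopic strains $\bar r_{\delta,\pm}=\lim_{L\to\infty}\frac1L\int_0^L R_\delta(\pm x)\,dx$; $\Upsilon_{e,\delta}=\Phi_\delta(\bar r_{\delta,+})-\Phi_\delta(\bar r_{\delta,-})$, $\Upsilon_{f,\delta}=\frac12\big(\Phi_\delta'(\bar r_{\delta,+})+\Phi_\delta'(\bar r_{\delta,-})\big)(\bar r_{\delta,+}-\bar r_{\delta,-})$, and $\Upsilon_\delta=\Upsilon_{e,\delta}-\Upsilon_{f,\delta}$.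 *)

theory Defs
  imports "HOL-Analysis.Analysis" "HOL-Library.Landau_Symbols"
begin

definition Delta1 :: "(real \<Rightarrow> real) \<Rightarrow> real \<Rightarrow> real" where
  "Delta1 F x = F (x + 1) - 2 * F x + F (x - 1)"

definition disp_a :: "real \<Rightarrow> real" where
  "disp_a k = sin (k / 2) / (k / 2)"

text \<open>W^{2,infinity}(R): R is differentiable with bounded R, bounded R' and Lipschitz R'
  (equivalently R, R', R'' essentially bounded).\<close>
definition W2inf :: "(real \<Rightarrow> real) \<Rightarrow> bool" where
  "W2inf R \<longleftrightarrow> (\<forall>x. R differentiable (at x)) \<and> bounded (range R) \<and>
     bounded (range (deriv R)) \<and> (\<exists>L. \<forall>x y. \<bar>deriv R x - deriv R y\<bar> \<le> L * \<bar>x - y\<bar>)"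

text \<open>Travelling wave equation  c^2 R'' = Delta_1 (R - F(R))  for R in W^{2,infinity},
  holding almost everywhere (F = Psi'_delta; for delta = 0, F = sgn).\<close>
definition tw_solution :: "real \<Rightarrow> (real \<Rightarrow> real) \<Rightarrow> (real \<Rightarrow> real) \<Rightarrow> bool" where
  "tw_solution c F R \<longleftrightarrow> W2inf R \<and>
     (AE x in lborel. \<exists>D. (deriv R has_real_derivative D) (at x) \<and>
                          c\<^sup>2 * D = Delta1 (\<lambda>y. R y - F (R y)) x)"

definition C2 :: "(real \<Rightarrow> real) \<Rightarrow> bool" where
  "C2 f \<longleftrightarrow> (\<exists>f' f''. (\<forall>x. (f has_real_derivative f' x) (at x)) \<and>
                     (\<forall>x. (f' has_real_derivative f'' x) (at x)) \<and> continuous_on UNIV f'')"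

definition rbar_plus :: "(real \<Rightarrow> real) \<Rightarrow> real" where
  "rbar_plus R = Lim at_top (\<lambda>L. (1 / L) * integral {0..L} R)"

definition rbar_minus :: "(real \<Rightarrow> real) \<Rightarrow> real" where
  "rbar_minus R = Lim at_top (\<lambda>L. (1 / L) * integral {0..L} (\<lambda>x. R (- x)))"

definition Upsilon :: "(real \<Rightarrow> real) \<Rightarrow> (real \<Rightarrow> real) \<Rightarrow> (real \<Rightarrow> real) \<Rightarrow> real" where
  "Upsilon Phi dPhi R =
     (Phi (rbar_plus R) - Phi (rbar_minus R))
     - (1 / 2) * (dPhi (rbar_plus R) + dPhi (rbar_minus R)) * (rbar_plus R - rbar_minus R)"

definition I_delta :: "(real \<Rightarrow> real) \<Rightarrow> real" where
  "I_delta Psi = (1 / 2) * integral UNIV (\<lambda>r. deriv Psi r - sgn r)"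

end

theory Submission
  imports Defs
begin


lemma integral_deriv_at:
  fixes f :: "real \<Rightarrow> real"
  assumes "continuous_on UNIV f" "L > 0"
  shows "((\<lambda>x. integral {0..x} f) has_real_derivative f L) (at L)"
proof -
  have "((\<lambda>x. integral {0..x} f) has_real_derivative f L) (at L within {0..L+1})"
    by (rule integral_has_real_derivative) (use assms in \<open>auto intro: continuous_on_subset\<close>)
  moreover have "at L within {0..L+1} = at L" using assms by (intro at_within_Icc_at) auto
  ultimately show ?thesis by simp
qed

lemma avg_tendsto:
  fixes f :: "real \<Rightarrow> real"
  assumes cont: "continuous_on UNIV f" and k: "k > 0"
    and lim: "((\<lambda>x. f x - a * cos (k*x) - b * sin (k*x)) \<longlongrightarrow> l) at_top"
  shows "((\<lambda>L. (1/L) * integral {0..L} f) \<longlongrightarrow> l) at_top"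
proof -
  define H where "H L = integral {0..L} f - a * sin (k*L) / k + b * cos (k*L) / k" for L
  have D: "eventually (\<lambda>L. DERIV H L :> f L - a * cos (k*L) - b * sin (k*L)) at_top"
  proof (rule eventually_mono[OF eventually_gt_at_top[of 0]])
    fix L :: real assume "L > 0"
    note I = integral_deriv_at[OF cont this]
    show "DERIV H L :> f L - a * cos (k*L) - b * sin (k*L)"
      unfolding H_def using k
      by (auto intro!: derivative_eq_intros I)
  qed
  have "((\<lambda>L. H L / L) \<longlongrightarrow> l) at_top"
    by (rule lhospital_at_top_at_top[where g' = "\<lambda>_. 1"])
       (use D lim in \<open>auto intro!: derivative_eq_intros filterlim_ident\<close>)
  moreover have "((\<lambda>L. (a * sin (k*L) / k - b * cos (k*L) / k) / L) \<longlongrightarrow> 0) at_top"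
  proof (rule Lim_null_comparison)
    show "eventually (\<lambda>L. norm ((a * sin (k*L) / k - b * cos (k*L) / k) / L) \<le> ((\<bar>a\<bar> + \<bar>b\<bar>)/k) / L) at_top"
    proof (rule eventually_mono[OF eventually_gt_at_top[of 0]])
      fix L :: real assume L: "L > 0"
      have "\<bar>a * sin (k*L) / k - b * cos (k*L) / k\<bar> \<le> (\<bar>a\<bar> + \<bar>b\<bar>)/k"
      proof -
        have "\<bar>a * sin (k*L) - b * cos (k*L)\<bar> \<le> \<bar>a\<bar> + \<bar>b\<bar>"
        proof -
          have "\<bar>a * sin (k*L)\<bar> \<le> \<bar>a\<bar>" by (simp add: abs_mult mult_left_le)
          moreover have "\<bar>b * cos (k*L)\<bar> \<le> \<bar>b\<bar>" by (simp add: abs_mult mult_left_le)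
          ultimately show ?thesis by linarith
        qed
        then show ?thesis using k by (simp add: diff_divide_distrib[symmetric] divide_right_mono)
      qed
      then have "\<bar>a * sin (k*L) / k - b * cos (k*L) / k\<bar> / L \<le> ((\<bar>a\<bar> + \<bar>b\<bar>)/k) / L"
        using L by (intro divide_right_mono) auto
      then show "norm ((a * sin (k*L) / k - b * cos (k*L) / k) / L) \<le> ((\<bar>a\<bar> + \<bar>b\<bar>)/k) / L"
        using L by simp
    qed
    show "((\<lambda>L. ((\<bar>a\<bar> + \<bar>b\<bar>)/k) / L) \<longlongrightarrow> 0) at_top"
      by (intro tendsto_divide_0[OF tendsto_const] filterlim_at_top_imp_at_infinity[OF filterlim_ident])
  qed
  ultimately have "((\<lambda>L. H L / L + (a * sin (k*L) / k - b * cos (k*L) / k) / L) \<longlongrightarrow> l + 0) at_top"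
    by (rule tendsto_add)
  then have "((\<lambda>L. H L / L + (a * sin (k*L) / k - b * cos (k*L) / k) / L) \<longlongrightarrow> l) at_top" by simp
  then show ?thesis
    by (rule Lim_transform_eventually[OF _ eventually_mono[OF eventually_gt_at_top[of 0]]])
       (simp add: H_def field_simps)
qed

lemma lim_ge:
  fixes f :: "real \<Rightarrow> real"
  assumes k: "k > 0"
    and lim: "((\<lambda>x. f x - a * cos (k*x) - b * sin (k*x)) \<longlongrightarrow> l) at_top"
    and ev: "eventually (\<lambda>x. f x > r) at_top"
  shows "l \<ge> r"
proof -
  have s1: "filterlim (\<lambda>n::nat. (2*pi/k) * real n) at_top sequentially"
    by (rule filterlim_tendsto_pos_mult_at_top[OF tendsto_const]) (use k in \<open>auto intro: filterlim_real_sequentially\<close>)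
  have s2: "filterlim (\<lambda>n::nat. (2*pi/k) * real n + pi/k) at_top sequentially"
    using filterlim_tendsto_add_at_top[OF tendsto_const s1, of "pi/k"] by (simp add: add.commute)
  have c1: "f ((2*pi/k) * real n) - a * cos (k*((2*pi/k) * real n)) - b * sin (k*((2*pi/k) * real n))
        = f ((2*pi/k) * real n) - a" for n
  proof -
    have "k*((2*pi/k) * real n) = 2 * real n * pi" using k by simp
    then show ?thesis by simp
  qed
  have c2: "f ((2*pi/k) * real n + pi/k) - a * cos (k*((2*pi/k) * real n + pi/k)) - b * sin (k*((2*pi/k) * real n + pi/k))
        = f ((2*pi/k) * real n + pi/k) + a" for n
  proof -
    have "k*((2*pi/k) * real n + pi/k) = 2 * real n * pi + pi" using k by (simp add: field_simps)
    then show ?thesis by (simp add: cos_add sin_add)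
  qed
  have t1: "((\<lambda>n. f ((2*pi/k) * real n) - a) \<longlongrightarrow> l) sequentially"
    using filterlim_compose[OF lim s1] by (simp only: c1)
  have t2: "((\<lambda>n. f ((2*pi/k) * real n + pi/k) + a) \<longlongrightarrow> l) sequentially"
    using filterlim_compose[OF lim s2] by (simp only: c2)
  have e1: "eventually (\<lambda>n. f ((2*pi/k) * real n) - a \<ge> r - a) sequentially"
    using filterlim_iff[THEN iffD1, OF s1, rule_format, OF ev] by (rule eventually_mono) auto
  have e2: "eventually (\<lambda>n. f ((2*pi/k) * real n + pi/k) + a \<ge> r + a) sequentially"
    using filterlim_iff[THEN iffD1, OF s2, rule_format, OF ev] by (rule eventually_mono) auto
  have "r - a \<le> l" by (rule tendsto_lowerbound[OF t1 e1]) simp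
  moreover have "r + a \<le> l" by (rule tendsto_lowerbound[OF t2 e2]) simp
  ultimately show ?thesis by linarith
qed



lemma psi_facts:
  fixes P :: "real \<Rightarrow> real" and d K :: real
  assumes d: "d > 0" and c2: "C2 P"
    and out: "\<And>r. \<bar>r\<bar> \<ge> d \<Longrightarrow> deriv P r = sgn r"
    and d1: "\<And>r. \<bar>deriv P r\<bar> \<le> K"
  shows "\<And>r. r \<ge> d \<Longrightarrow> P r = P d + (r - d)"
    and "\<And>r. r \<le> -d \<Longrightarrow> P r = P (-d) - (r + d)"
    and "I_delta P = (P d - P (-d)) / 2"
    and "\<bar>P d - P (-d)\<bar> \<le> 2 * d * K"
proof -
  obtain f' f'' where D1: "\<And>x. (P has_real_derivative f' x) (at x)"
    using c2 unfolding C2_def by blast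
  have D: "\<And>x. (P has_real_derivative deriv P x) (at x)"
    using D1 DERIV_imp_deriv by metis
  show "P r = P d + (r - d)" if "r \<ge> d" for r
  proof (cases "r = d")
    case False
    then have "d < r" using that by simp
    from MVT2[OF this D] obtain z where "d < z" "z < r" "P r - P d = (r - d) * deriv P z" by blast
    moreover have "deriv P z = 1" using out[of z] \<open>d < z\<close> d by simp
    ultimately show ?thesis by simp
  qed simp
  show "P r = P (-d) - (r + d)" if "r \<le> -d" for r
  proof (cases "r = -d")
    case False
    then have "r < -d" using that by simp
    from MVT2[OF this D] obtain z where "r < z" "z < -d" "P (-d) - P r = (-d - r) * deriv P z" by blast
    moreover have "deriv P z = -1" using out[of z] \<open>z < -d\<close> d by simp
    ultimately show ?thesis by simp
  qed simp
  show "\<bar>P d - P (-d)\<bar> \<le> 2 * d * K"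
  proof -
    have "-d < d" using d by simp
    from MVT2[OF this D] obtain z where "P d - P (-d) = (d - -d) * deriv P z" by blast
    then have "\<bar>P d - P (-d)\<bar> = 2 * d * \<bar>deriv P z\<bar>" using d by (simp add: abs_mult)
    also have "\<dots> \<le> 2 * d * K" using d d1[of z] by simp
    finally show ?thesis .
  qed
  define g where "g r = deriv P r - sgn r" for r
  have i1: "((\<lambda>r. deriv P r - 1) has_integral ((P d - d) - (P 0 - 0))) {0..d}"
    by (rule fundamental_theorem_of_calculus)
       (use d in \<open>simp\<close>, unfold has_real_derivative_iff_has_vector_derivative[symmetric],
        rule has_field_derivative_at_within[OF DERIV_diff[OF D DERIV_ident]])
  have i1': "(g has_integral ((P d - d) - (P 0 - 0))) {0..d}"
    by (rule has_integral_spike[OF _ _ i1, of "{0}"]) (auto simp: g_def)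
  have i2: "((\<lambda>r. deriv P r + 1) has_integral ((P 0 + 0) - (P (-d) + -d))) {-d..0}"
    by (rule fundamental_theorem_of_calculus)
       (use d in \<open>simp\<close>, unfold has_real_derivative_iff_has_vector_derivative[symmetric],
        rule has_field_derivative_at_within[OF DERIV_add[OF D DERIV_ident]])
  have i2': "(g has_integral ((P 0 + 0) - (P (-d) + -d))) {-d..0}"
    by (rule has_integral_spike[OF _ _ i2, of "{0}"]) (auto simp: g_def)
  have "(g has_integral ((P 0 + 0) - (P (-d) + -d) + ((P d - d) - (P 0 - 0)))) {-d..d}"
    by (rule has_integral_combine[OF _ _ i2' i1']) (use d in auto)
  then have gi: "integral {-d..d} g = P d - P (-d)" by (simp add: integral_unique)
  have "(\<lambda>r. deriv P r - sgn r) = (\<lambda>r. if r \<in> {-d..d} then g r else 0)"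
  proof
    fix r show "deriv P r - sgn r = (if r \<in> {-d..d} then g r else 0)"
      using out[of r] by (cases "r \<in> {-d..d}") (auto simp: g_def)
  qed
  then show "I_delta P = (P d - P (-d)) / 2"
    unfolding I_delta_def by (simp only: integral_restrict_UNIV gi)
qed



lemma ups_calc:
  fixes P R :: "real \<Rightarrow> real" and d :: real
  assumes "d > 0" and p: "rbar_plus R \<ge> d" and m: "rbar_minus R \<le> -d"
    and a: "\<And>r. r \<ge> d \<Longrightarrow> P r = P d + (r - d)"
    and b: "\<And>r. r \<le> -d \<Longrightarrow> P r = P (-d) - (r + d)"
    and dp: "deriv P (rbar_plus R) = 1" and dm: "deriv P (rbar_minus R) = -1"
  shows "Upsilon (\<lambda>r. r\<^sup>2 / 2 - P r) (\<lambda>r. r - deriv P r) R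
     = - (rbar_plus R + rbar_minus R) - (P d - P (-d))"
  unfolding Upsilon_def using a[OF p] b[OF m] dp dm
  by (simp add: power2_eq_square field_simps)

lemma ups_calc0:
  fixes R :: "real \<Rightarrow> real"
  assumes p: "rbar_plus R > 0" and m: "rbar_minus R < 0"
  shows "Upsilon (\<lambda>r. r\<^sup>2 / 2 - \<bar>r\<bar>) (\<lambda>r. r - sgn r) R = - (rbar_plus R + rbar_minus R)"
  unfolding Upsilon_def using p m
  by (simp add: power2_eq_square field_simps)

lemma avg_bound:
  fixes f :: "real \<Rightarrow> real"
  assumes "continuous_on UNIV f" "\<And>x. \<bar>f x\<bar> \<le> B"
    and "((\<lambda>L. (1/L) * integral {0..L} f) \<longlongrightarrow> l) at_top"
  shows "\<bar>l\<bar> \<le> B"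
proof -
  have "eventually (\<lambda>L. \<bar>(1/L) * integral {0..L} f\<bar> \<le> B) at_top"
  proof (rule eventually_mono[OF eventually_gt_at_top[of 0]])
    fix L :: real assume L: "L > 0"
    have "norm (integral {0..L} f) \<le> B * (L - 0)"
      by (rule integral_bound) (use assms L in \<open>auto intro: continuous_on_subset\<close>)
    then show "\<bar>(1/L) * integral {0..L} f\<bar> \<le> B" using L
      by (simp add: abs_mult divide_le_eq mult.commute)
  qed
  then show ?thesis
    using tendsto_upperbound[OF tendsto_rabs[OF assms(3)]] by simp
qed



theorem lemma5p1:
  fixes Psi :: "real \<Rightarrow> real \<Rightarrow> real" and C_Psi :: real
    and c0 x0 r0 d0 D0 :: real and kc :: "real \<Rightarrow> real"
    and Rc :: "real \<Rightarrow> (real \<Rightarrow> real) set" and Rbar :: "real \<Rightarrow> real \<Rightarrow> real"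
    and U :: "real \<Rightarrow> (real \<times> real) set" and am bm :: "real \<Rightarrow> real"
    and c1 c :: real and R0 :: "real \<Rightarrow> real"
    and delta0 C :: real and S :: "real \<Rightarrow> real \<Rightarrow> real"
  assumes Psi_C2: "\<And>\<delta>. \<delta> > 0 \<Longrightarrow> C2 (Psi \<delta>)"
    and Psi_0: "\<And>\<delta>. \<delta> > 0 \<Longrightarrow> Psi \<delta> 0 = 0"
    and Psi_out: "\<And>\<delta> r. \<delta> > 0 \<Longrightarrow> \<bar>r\<bar> \<ge> \<delta> \<Longrightarrow> deriv (Psi \<delta>) r = sgn r"
    and Psi_d1: "\<And>\<delta> r. \<delta> > 0 \<Longrightarrow> \<bar>deriv (Psi \<delta>) r\<bar> \<le> C_Psi"
    and Psi_d2: "\<And>\<delta> r. \<delta> > 0 \<Longrightarrow> \<bar>deriv (deriv (Psi \<delta>)) r\<bar> \<le> C_Psi / \<delta>"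
    \<comment> \<open>standing hypothesis: unperturbed waves\<close>
    and c0: "0 < c0" "c0 < 1"
    and consts_pos: "x0 > 0" "r0 > 0" "d0 > 0" "D0 > 0"
    and kc: "\<And>c'. c' \<in> {c0..<1} \<Longrightarrow>
              kc c' > 0 \<and> disp_a (kc c') = c' \<and> (\<forall>k>0. disp_a k = c' \<longrightarrow> k = kc c')"
    and Rc_def: "\<And>c'. c' \<in> {c0..<1} \<Longrightarrow> open (U c') \<and> (0, 0) \<in> U c' \<and>
              Rc c' = {(\<lambda>x. Rbar c' x + \<alpha> * (cos (kc c' * x) - 1) + \<beta> * sin (kc c' * x))
                        | \<alpha> \<beta>. (\<alpha>, \<beta>) \<in> U c'}"
    and Rbar_tails: "\<And>c'. c' \<in> {c0..<1} \<Longrightarrow>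
              (\<exists>l. (Rbar c' \<longlongrightarrow> l) at_top) \<and>
              (\<exists>l. ((\<lambda>x. Rbar c' x - am c' * (cos (kc c' * x) - 1) - bm c' * sin (kc c' * x))
                       \<longlongrightarrow> l) at_bot)"
    and Rc_props: "\<And>c' R. c' \<in> {c0..<1} \<Longrightarrow> R \<in> Rc c' \<Longrightarrow>
              tw_solution c' sgn R \<and> R 0 = 0 \<and> (\<forall>x. \<bar>R x\<bar> \<le> D0 / (1 - c'\<^sup>2)) \<and>
              (\<forall>x>x0. R x > r0) \<and> (\<forall>x< -x0. R x < - r0) \<and>
              (\<forall>x. \<bar>x\<bar> < x0 \<longrightarrow> deriv R x > d0)"
    \<comment> \<open>the fixed data of the lemma\<close>
    and c1: "c0 < c1" "c1 < 1"
    and c: "c0 < c" "c < c1"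
    and R0: "R0 \<in> Rc c"
    \<comment> \<open>the travelling waves R_delta = R0 - I_delta + S_delta from the Main Theorem\<close>
    and delta0: "delta0 > 0"
    and S_W2: "\<And>\<delta>. \<delta> \<in> {0<..<delta0} \<Longrightarrow> W2inf (S \<delta>)"
    and S_0: "\<And>\<delta>. \<delta> \<in> {0<..<delta0} \<Longrightarrow> S \<delta> 0 = 0"
    and S_bd0: "\<And>\<delta> x. \<delta> \<in> {0<..<delta0} \<Longrightarrow> \<bar>S \<delta> x\<bar> \<le> C * \<delta>\<^sup>2"
    and S_bd1: "\<And>\<delta> x. \<delta> \<in> {0<..<delta0} \<Longrightarrow> \<bar>deriv (S \<delta>) x\<bar> \<le> C * \<delta>"
    and S_bd2: "\<And>\<delta> x y. \<delta> \<in> {0<..<delta0} \<Longrightarrow>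
              \<bar>deriv (S \<delta>) x - deriv (S \<delta>) y\<bar> \<le> C * \<bar>x - y\<bar>"
    and S_plus: "\<And>\<delta>. \<delta> \<in> {0<..<delta0} \<Longrightarrow> \<exists>l. (S \<delta> \<longlongrightarrow> l) at_top"
    and S_minus: "\<And>\<delta>. \<delta> \<in> {0<..<delta0} \<Longrightarrow> \<exists>\<alpha> \<beta> l.
              ((\<lambda>x. S \<delta> x - \<alpha> * (cos (kc c * x) - 1) - \<beta> * sin (kc c * x)) \<longlongrightarrow> l) at_bot"
    and R_tw: "\<And>\<delta>. \<delta> \<in> {0<..<delta0} \<Longrightarrow>
              tw_solution c (deriv (Psi \<delta>)) (\<lambda>x. R0 x - I_delta (Psi \<delta>) + S \<delta> x)"
  shows "(\<lambda>\<delta>. Upsilon (\<lambda>r. r\<^sup>2 / 2 - Psi \<delta> r) (\<lambda>r. r - deriv (Psi \<delta>) r)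
                       (\<lambda>x. R0 x - I_delta (Psi \<delta>) + S \<delta> x)
             - Upsilon (\<lambda>r. r\<^sup>2 / 2 - \<bar>r\<bar>) (\<lambda>r. r - sgn r) R0)
         \<in> O[at_right 0](\<lambda>\<delta>. \<delta>\<^sup>2)"
proof -
  have cI: "c \<in> {c0..<1}" using c c1 by auto
  define k where "k = kc c"
  have k: "k > 0" using kc[OF cI] k_def by simp
  obtain \<alpha> \<beta> where R0eq: "R0 = (\<lambda>x. Rbar c x + \<alpha> * (cos (k * x) - 1) + \<beta> * sin (k * x))"
    using R0 Rc_def[OF cI] k_def by auto
  have R0p: "tw_solution c sgn R0" "\<forall>x>x0. R0 x > r0" "\<forall>x< -x0. R0 x < - r0"
    using Rc_props[OF cI R0] by auto
  have contR0: "continuous_on UNIV R0"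
    using R0p(1) unfolding tw_solution_def W2inf_def
    by (intro continuous_at_imp_continuous_on) (auto intro: differentiable_imp_continuous_within)
  obtain lR where lR: "(Rbar c \<longlongrightarrow> lR) at_top" using Rbar_tails[OF cI] by blast
  obtain lm where lm: "((\<lambda>x. Rbar c x - am c * (cos (k * x) - 1) - bm c * sin (k * x)) \<longlongrightarrow> lm) at_bot"
    using Rbar_tails[OF cI] k_def by blast
  define p0 where "p0 = lR - \<alpha>"
  have tp0: "((\<lambda>x. R0 x - \<alpha> * cos (k*x) - \<beta> * sin (k*x)) \<longlongrightarrow> p0) at_top"
  proof -
    have "((\<lambda>x. Rbar c x - \<alpha>) \<longlongrightarrow> p0) at_top" unfolding p0_def by (intro tendsto_intros lR)
    then show ?thesis unfolding R0eq by (simp add: algebra_simps)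
  qed
  have avp0: "((\<lambda>L. (1/L) * integral {0..L} R0) \<longlongrightarrow> p0) at_top"
    by (rule avg_tendsto[OF contR0 k tp0])
  have p0_ge: "p0 \<ge> r0"
    by (rule lim_ge[OF k tp0]) (use R0p(2) in \<open>auto intro: eventually_mono[OF eventually_gt_at_top[of x0]]\<close>)
  define m0 where "m0 = lm - am c - \<alpha>"
  have lm': "((\<lambda>x. Rbar c (-x) - am c * (cos (k * x) - 1) + bm c * sin (k * x)) \<longlongrightarrow> lm) at_top"
    using lm unfolding filterlim_at_bot_mirror by simp
  have tm0: "((\<lambda>x. R0 (-x) - (am c + \<alpha>) * cos (k*x) - (- (bm c + \<beta>)) * sin (k*x)) \<longlongrightarrow> m0) at_top"
  proof -
    have "((\<lambda>x. (Rbar c (-x) - am c * (cos (k * x) - 1) + bm c * sin (k * x)) - am c - \<alpha>) \<longlongrightarrow> m0) at_top"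
      unfolding m0_def by (intro tendsto_intros lm')
    then show ?thesis unfolding R0eq by (simp add: algebra_simps)
  qed
  have contR0m: "continuous_on UNIV (\<lambda>x. R0 (-x))"
    by (rule continuous_on_compose2[OF contR0]) (auto intro: continuous_intros)
  have avm0: "((\<lambda>L. (1/L) * integral {0..L} (\<lambda>x. R0 (-x))) \<longlongrightarrow> m0) at_top"
    by (rule avg_tendsto[OF contR0m k tm0])
  have m0_le: "m0 \<le> -r0"
  proof -
    have tmm: "((\<lambda>x. - R0 (-x) - (- (am c + \<alpha>)) * cos (k*x) - (bm c + \<beta>) * sin (k*x)) \<longlongrightarrow> - m0) at_top"
      using tendsto_minus[OF tm0] by (simp add: algebra_simps)
    have "- m0 \<ge> r0"
    proof (rule lim_ge[OF k tmm], rule eventually_mono[OF eventually_gt_at_top[of x0]])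
      fix x assume "x0 < x"
      then have "R0 (-x) < - r0" using R0p(3) by auto
      then show "r0 < - R0 (- x)" by simp
    qed
    then show ?thesis by simp
  qed
  have rp0: "rbar_plus R0 = p0" unfolding rbar_plus_def by (rule tendsto_Lim[OF _ avp0]) simp
  have rm0: "rbar_minus R0 = m0" unfolding rbar_minus_def by (rule tendsto_Lim[OF _ avm0]) simp
  have U0: "Upsilon (\<lambda>r. r\<^sup>2 / 2 - \<bar>r\<bar>) (\<lambda>r. r - sgn r) R0 = - (p0 + m0)"
    using ups_calc0[of R0] rp0 rm0 p0_ge m0_le consts_pos by simp
  have key: "\<exists>e1 e2. \<bar>e1\<bar> \<le> C * \<delta>\<^sup>2 \<and> \<bar>e2\<bar> \<le> C * \<delta>\<^sup>2 \<and>
      rbar_plus (\<lambda>x. R0 x - I_delta (Psi \<delta>) + S \<delta> x) = p0 - I_delta (Psi \<delta>) + e1 \<and>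
      rbar_minus (\<lambda>x. R0 x - I_delta (Psi \<delta>) + S \<delta> x) = m0 - I_delta (Psi \<delta>) + e2"
    if d: "\<delta> \<in> {0<..<delta0}" for \<delta>
  proof -
    define I where "I = I_delta (Psi \<delta>)"
    have contS: "continuous_on UNIV (S \<delta>)"
      using S_W2[OF d] unfolding W2inf_def
      by (intro continuous_at_imp_continuous_on) (auto intro: differentiable_imp_continuous_within)
    have contSm: "continuous_on UNIV (\<lambda>x. S \<delta> (-x))"
      by (rule continuous_on_compose2[OF contS]) (auto intro: continuous_intros)
    obtain ls where ls: "(S \<delta> \<longlongrightarrow> ls) at_top" using S_plus[OF d] by blast
    obtain as bs ls' where ls': "((\<lambda>x. S \<delta> x - as * (cos (k * x) - 1) - bs * sin (k * x)) \<longlongrightarrow> ls') at_bot"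
      using S_minus[OF d] k_def by blast
    have t1: "((\<lambda>x. S \<delta> x - 0 * cos (k*x) - 0 * sin (k*x)) \<longlongrightarrow> ls) at_top" using ls by simp
    have av1: "((\<lambda>L. (1/L) * integral {0..L} (S \<delta>)) \<longlongrightarrow> ls) at_top"
      by (rule avg_tendsto[OF contS k t1])
    have ls'': "((\<lambda>x. S \<delta> (-x) - as * (cos (k * x) - 1) + bs * sin (k * x)) \<longlongrightarrow> ls') at_top"
      using ls' unfolding filterlim_at_bot_mirror by simp
    have t2: "((\<lambda>x. S \<delta> (-x) - as * cos (k*x) - (-bs) * sin (k*x)) \<longlongrightarrow> ls' - as) at_top"
    proof -
      have "((\<lambda>x. (S \<delta> (-x) - as * (cos (k * x) - 1) + bs * sin (k * x)) - as) \<longlongrightarrow> ls' - as) at_top"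
        by (intro tendsto_intros ls'')
      then show ?thesis by (simp add: algebra_simps)
    qed
    have av2: "((\<lambda>L. (1/L) * integral {0..L} (\<lambda>x. S \<delta> (-x))) \<longlongrightarrow> ls' - as) at_top"
      by (rule avg_tendsto[OF contSm k t2])
    have b1: "\<bar>ls\<bar> \<le> C * \<delta>\<^sup>2" by (rule avg_bound[OF contS S_bd0[OF d] av1])
    have b2: "\<bar>ls' - as\<bar> \<le> C * \<delta>\<^sup>2" by (rule avg_bound[OF contSm S_bd0[OF d] av2])
    have lin: "(1/L) * integral {0..L} (\<lambda>x. g x - I + h x) = (1/L) * integral {0..L} g - I + (1/L) * integral {0..L} h"
      if "L > 0" "continuous_on UNIV g" "continuous_on UNIV h" for L and g h :: "real \<Rightarrow> real"
    proof -
      have ig: "g integrable_on {0..L}" "h integrable_on {0..L}" "(\<lambda>x. I) integrable_on {0..L}"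
        using that by (auto intro!: integrable_continuous_interval intro: continuous_on_subset)
      have "integral {0..L} (\<lambda>x. g x - I + h x) = integral {0..L} g - integral {0..L} (\<lambda>x. I) + integral {0..L} h"
        using ig by (simp add: integral_add integral_diff integrable_diff)
      then show ?thesis using that by (simp add: field_simps)
    qed
    have avP: "((\<lambda>L. (1/L) * integral {0..L} (\<lambda>x. R0 x - I + S \<delta> x)) \<longlongrightarrow> p0 - I + ls) at_top"
    proof -
      have "((\<lambda>L. (1/L) * integral {0..L} R0 - I + (1/L) * integral {0..L} (S \<delta>)) \<longlongrightarrow> p0 - I + ls) at_top"
        by (intro tendsto_intros avp0 av1)
      then show ?thesis
        by (rule Lim_transform_eventually[OF _ eventually_mono[OF eventually_gt_at_top[of 0]]])
           (rule lin[OF _ contR0 contS, symmetric], assumption)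
    qed
    have avM: "((\<lambda>L. (1/L) * integral {0..L} (\<lambda>x. R0 (-x) - I + S \<delta> (-x))) \<longlongrightarrow> m0 - I + (ls' - as)) at_top"
    proof -
      have "((\<lambda>L. (1/L) * integral {0..L} (\<lambda>x. R0 (-x)) - I + (1/L) * integral {0..L} (\<lambda>x. S \<delta> (-x))) \<longlongrightarrow> m0 - I + (ls' - as)) at_top"
        by (intro tendsto_intros avm0 av2)
      then show ?thesis
        by (rule Lim_transform_eventually[OF _ eventually_mono[OF eventually_gt_at_top[of 0]]])
           (rule lin[OF _ contR0m contSm, symmetric], assumption)
    qed
    have "rbar_plus (\<lambda>x. R0 x - I + S \<delta> x) = p0 - I + ls"
      unfolding rbar_plus_def by (rule tendsto_Lim[OF _ avP]) simp
    moreover have "rbar_minus (\<lambda>x. R0 x - I + S \<delta> x) = m0 - I + (ls' - as)"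
      unfolding rbar_minus_def by (rule tendsto_Lim[OF _ avM]) simp
    ultimately show ?thesis using b1 b2 unfolding I_def by blast
  qed
  have lim0: "((\<lambda>\<delta>::real. \<delta> * (\<bar>C_Psi\<bar> + 1) + \<bar>C\<bar> * \<delta>\<^sup>2) \<longlongrightarrow> 0) (at_right 0)"
  proof -
    have "((\<lambda>\<delta>::real. \<delta> * (\<bar>C_Psi\<bar> + 1) + \<bar>C\<bar> * \<delta>\<^sup>2) \<longlongrightarrow> 0 * (\<bar>C_Psi\<bar> + 1) + \<bar>C\<bar> * 0\<^sup>2) (at_right 0)"
      by (intro tendsto_intros)
    then show ?thesis by simp
  qed
  have ev1: "eventually (\<lambda>\<delta>::real. \<delta> * (\<bar>C_Psi\<bar> + 1) + \<bar>C\<bar> * \<delta>\<^sup>2 < r0) (at_right 0)"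
    using order_tendstoD(2)[OF lim0] consts_pos by simp
  have ev2: "eventually (\<lambda>\<delta>::real. \<delta> \<in> {0<..<delta0}) (at_right 0)"
    using delta0 eventually_at_right_real[of 0 delta0] by simp
  show ?thesis
  proof (rule bigoI[where c = "2 * \<bar>C\<bar>"])
    show "eventually (\<lambda>\<delta>. norm (Upsilon (\<lambda>r. r\<^sup>2 / 2 - Psi \<delta> r) (\<lambda>r. r - deriv (Psi \<delta>) r)
                       (\<lambda>x. R0 x - I_delta (Psi \<delta>) + S \<delta> x)
             - Upsilon (\<lambda>r. r\<^sup>2 / 2 - \<bar>r\<bar>) (\<lambda>r. r - sgn r) R0) \<le> 2 * \<bar>C\<bar> * norm (\<delta>\<^sup>2)) (at_right 0)"
    proof (rule eventually_mono[OF eventually_conj[OF ev1 ev2]])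
      fix \<delta> :: real assume H: "\<delta> * (\<bar>C_Psi\<bar> + 1) + \<bar>C\<bar> * \<delta>\<^sup>2 < r0 \<and> \<delta> \<in> {0<..<delta0}"
      then have d: "\<delta> \<in> {0<..<delta0}" and dpos: "\<delta> > 0" by auto
      define I where "I = I_delta (Psi \<delta>)"
      define R where "R = (\<lambda>x. R0 x - I_delta (Psi \<delta>) + S \<delta> x)"
      note pf = psi_facts[OF dpos Psi_C2[OF dpos] Psi_out[OF dpos] Psi_d1[OF dpos]]
      have Ib: "\<bar>I\<bar> \<le> \<delta> * \<bar>C_Psi\<bar>"
      proof -
        have "\<bar>I\<bar> \<le> \<delta> * C_Psi" using pf(3,4) unfolding I_def by simp
        also have "\<dots> \<le> \<delta> * \<bar>C_Psi\<bar>" using dpos by (intro mult_left_mono) auto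
        finally show ?thesis .
      qed
      obtain e1 e2 where e: "\<bar>e1\<bar> \<le> C * \<delta>\<^sup>2" "\<bar>e2\<bar> \<le> C * \<delta>\<^sup>2"
        "rbar_plus R = p0 - I + e1" "rbar_minus R = m0 - I + e2"
        using key[OF d] unfolding R_def I_def by blast
      have Cd: "C * \<delta>\<^sup>2 \<le> \<bar>C\<bar> * \<delta>\<^sup>2" by (intro mult_right_mono) auto
      have Hd: "\<delta> * (\<bar>C_Psi\<bar> + 1) = \<delta> * \<bar>C_Psi\<bar> + \<delta>" by (simp add: algebra_simps)
      have H1: "\<delta> * (\<bar>C_Psi\<bar> + 1) + \<bar>C\<bar> * \<delta>\<^sup>2 < r0" using H by blast
      have pge: "rbar_plus R \<ge> \<delta>" using e(1,3) Ib Cd H1 Hd p0_ge by linarith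
      have mle: "rbar_minus R \<le> -\<delta>" using e(2,4) Ib Cd H1 Hd m0_le by linarith
      have dp: "deriv (Psi \<delta>) (rbar_plus R) = 1" using Psi_out[OF dpos, of "rbar_plus R"] pge dpos by simp
      have dm: "deriv (Psi \<delta>) (rbar_minus R) = -1" using Psi_out[OF dpos, of "rbar_minus R"] mle dpos by simp
      have Ud: "Upsilon (\<lambda>r. r\<^sup>2 / 2 - Psi \<delta> r) (\<lambda>r. r - deriv (Psi \<delta>) r) R
          = - (rbar_plus R + rbar_minus R) - (Psi \<delta> \<delta> - Psi \<delta> (-\<delta>))"
        by (rule ups_calc[OF dpos pge mle pf(1) pf(2) dp dm])
      have "Upsilon (\<lambda>r. r\<^sup>2 / 2 - Psi \<delta> r) (\<lambda>r. r - deriv (Psi \<delta>) r) R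
             - Upsilon (\<lambda>r. r\<^sup>2 / 2 - \<bar>r\<bar>) (\<lambda>r. r - sgn r) R0 = - (e1 + e2)"
        using Ud U0 e(3,4) pf(3) unfolding I_def by simp
      moreover have "\<bar>e1 + e2\<bar> \<le> 2 * \<bar>C\<bar> * norm (\<delta>\<^sup>2)" using e(1,2) Cd by simp
      ultimately show "norm (Upsilon (\<lambda>r. r\<^sup>2 / 2 - Psi \<delta> r) (\<lambda>r. r - deriv (Psi \<delta>) r)
                       (\<lambda>x. R0 x - I_delta (Psi \<delta>) + S \<delta> x)
             - Upsilon (\<lambda>r. r\<^sup>2 / 2 - \<bar>r\<bar>) (\<lambda>r. r - sgn r) R0) \<le> 2 * \<bar>C\<bar> * norm (\<delta>\<^sup>2)"
        unfolding R_def by simp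
    qed
  qed
qed

end
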